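(* Let $\mathbb{Y}$ and $\mathbb{T}$ be sets and let $\underline{\mathsf{P}}_{Y,\Theta}$ be a coherent lower prevision on the linear space $\mathfrak{F}$ of bounded real-valued functions (gambles) on $\mathbb{Y}\times\mathbb{T}$. Suppose $\underline{\mathsf{P}}_{Y,\Theta}$ is $\mathscr{B}$-conglomerable, where $\mathscr{B}=\{B_y=\{y\}\times\mathbb{T}: y\in\mathbb{Y}\}$. Let $\{\underline{\Gamma}_y: y\in\mathbb{Y}\}$ be the generalized Bayes IM (defined in the context). Let $y\mapsto(\underline{\Pi}_y,\overline{\Pi}_y)$ be an inferential model such that $\underline{\Pi}_y\le\underline{\Gamma}_y$ for every $y\in\mathbb{Y}$. Then this IM is invulnerable, i.e., for every $H\subseteq\mathbb{T}$ and every $\beta\in[0,1]$, the gamble $$f^{H,\beta}(y,\theta)=\{1(\theta\in H)-\beta\}\,1\{\underline{\Pi}_y(H)>\beta\},\qquad (y,\theta)\in\mathbb{Y}\times\mathbb{T},$$ satisfies $\underline{\mathsf{P}}_{Y,\Theta}(f^{H,\beta})\ge 0$.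
   Context: A lower prevision $\underline{\mathsf{P}}$ on a linear space $\mathfrak{F}$ of bounded gambles on a set $\Omega$ is coherent if for all integers $m,K\ge0$ and all $f_0,\dots,f_K\in\mathfrak{F}$, $\sup_{\omega}\bigl[\sum_{k=1}^K\{f_k(\omega)-\underline{\mathsf{P}}(f_k)\}-m\{f_0(\omega)-\underline{\mathsf{P}}(f_0)\}\bigr]\ge0$; its conjugate upper prevision is $\overline{\mathsf{P}}(f)=-\underline{\mathsf{P}}(-f)$, and for a set $B$ one writes $\underline{\mathsf{P}}(B)=\underline{\mathsf{P}}(1_B)$. $\underline{\mathsf{P}}_{Y,\Theta}$ is $\mathscr{B}$-conglomerable if for every gamble $f$ and every countable collection $\{B_{y_k}\}$ of distinct sets from $\mathscr{B}$, if $\underline{\mathsf{P}}_{Y,\Theta}(1_{B_{y_k}}f)>0$ for all $k$, then $\underline{\mathsf{P}}_{Y,\Theta}(1_{\bigcup_kB_{y_k}}f)\ge0$. An inferential model (IM) is a map $y\mapsto(\underline{\Pi}_y,\overline{\Pi}_y)$ assigning to each $y\in\mathbb{Y}$ a coherent lower prevision $\underline{\Pi}_y$ (with conjugate upper prevision $\overline{\Pi}_y$) on the bounded gambles $f_y(\theta)=f(y,\theta)$ on $\mathbb{T}$; for $H\subseteq\mathbb{T}$, $\underline{\Pi}_y(H)=\underline{\Pi}_y(1_H)$. The generalized Bayes IM is defined, for each $y$ and $f\in\mathfrak{F}$, by: if $\underline{\mathsf{P}}_{Y,\Theta}(\{y\}\times\mathbb{T})=0$, then $\underline{\Gamma}_y(f_y)=\inf_{\theta\in\mathbb{T}}f(y,\theta)$;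 if $\underline{\mathsf{P}}_{Y,\Theta}(\{y\}\times\mathbb{T})>0$, then $\underline{\Gamma}_y(f_y)=\min\{\mathsf{P}(f\,1_{\{y\}\times\mathbb{T}})/\mathsf{P}(1_{\{y\}\times\mathbb{T}}):\mathsf{P}\in\mathscr{C}(\underline{\mathsf{P}}_{Y,\Theta})\}$, where $\mathscr{C}(\underline{\mathsf{P}}_{Y,\Theta})$ is the set of all linear previsions (finitely additive expectations) $\mathsf{P}$ on $\mathfrak{F}$ with $\mathsf{P}\ge\underline{\mathsf{P}}_{Y,\Theta}$ pointwise. *)

theory Defs
  imports "HOL-Analysis.Analysis"
begin

definition gamble :: "('a \<Rightarrow> real) \<Rightarrow> bool" where
  "gamble f \<longleftrightarrow> (\<exists>B. \<forall>x. \<bar>f x\<bar> \<le> B)"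

definition coherent_lp :: "(('a \<Rightarrow> real) \<Rightarrow> real) \<Rightarrow> bool" where
  "coherent_lp LP \<longleftrightarrow>
     (\<forall>(m::nat) (K::nat) (fs::nat \<Rightarrow> 'a \<Rightarrow> real).
        (\<forall>k\<le>K. gamble (fs k)) \<longrightarrow>
        0 \<le> (SUP \<omega>. (\<Sum>k=1..K. fs k \<omega> - LP (fs k)) - real m * (fs 0 \<omega> - LP (fs 0))))"

definition linear_prevision :: "(('a \<Rightarrow> real) \<Rightarrow> real) \<Rightarrow> bool" where
  "linear_prevision P \<longleftrightarrow>
     (\<forall>f g. gamble f \<longrightarrow> gamble g \<longrightarrow> P (\<lambda>x. f x + g x) = P f + P g) \<and>
     (\<forall>c f. gamble f \<longrightarrow> P (\<lambda>x. c * f x) = c * P f) \<and>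
     (\<forall>f. gamble f \<longrightarrow> (INF x. f x) \<le> P f)"

definition credal :: "(('a \<Rightarrow> real) \<Rightarrow> real) \<Rightarrow> (('a \<Rightarrow> real) \<Rightarrow> real) set" where
  "credal LP = {P. linear_prevision P \<and> (\<forall>f. gamble f \<longrightarrow> LP f \<le> P f)}"

definition Bcell :: "'y \<Rightarrow> ('y \<times> 't) set" where
  "Bcell y = {y} \<times> UNIV"

definition B_conglomerable :: "((('y \<times> 't) \<Rightarrow> real) \<Rightarrow> real) \<Rightarrow> bool" where
  "B_conglomerable LP \<longleftrightarrow>
     (\<forall>f (Y0::'y set). gamble f \<longrightarrow> countable Y0 \<longrightarrow>
        (\<forall>y\<in>Y0. 0 < LP (\<lambda>p. indicator (Bcell y) p * f p)) \<longrightarrow>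
        0 \<le> LP (\<lambda>p. indicator (\<Union>y\<in>Y0. Bcell y) p * f p))"

text \<open>The generalized Bayes IM, evaluated at y on the gamble g = f_y on T.
  The minimum over the credal set is written as an infimum.\<close>
definition gen_bayes :: "((('y \<times> 't) \<Rightarrow> real) \<Rightarrow> real) \<Rightarrow> 'y \<Rightarrow> ('t \<Rightarrow> real) \<Rightarrow> real" where
  "gen_bayes LP y g =
     (if LP (indicator (Bcell y)) = 0 then (INF \<theta>. g \<theta>)
      else (INF P\<in>credal LP.
              P (\<lambda>p. g (snd p) * indicator (Bcell y) p) / P (indicator (Bcell y))))"

end

theory Submission
  imports Defs
begin


lemma gamble_add: "gamble f \<Longrightarrow> gamble g \<Longrightarrow> gamble (\<lambda>x. f x + g x)"
  unfolding gamble_def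
proof (elim exE)
  fix A B assume A: "\<forall>x. \<bar>f x\<bar> \<le> A" and B: "\<forall>x. \<bar>g x\<bar> \<le> B"
  show "\<exists>C. \<forall>x. \<bar>f x + g x\<bar> \<le> C"
    by (rule exI[of _ "A+B"]) (metis A B abs_triangle_ineq add_mono order_trans)
qed

lemma gamble_scale: "gamble f \<Longrightarrow> gamble (\<lambda>x. c * f x)"
  unfolding gamble_def
proof (elim exE)
  fix A assume A: "\<forall>x. \<bar>f x\<bar> \<le> A"
  show "\<exists>C. \<forall>x. \<bar>c * f x\<bar> \<le> C"
    by (rule exI[of _ "\<bar>c\<bar>*A"]) (simp add: A abs_mult mult_left_mono)
qed

lemma gamble_const: "gamble (\<lambda>x. c)"
  unfolding gamble_def by auto

lemma gamble_neg: "gamble f \<Longrightarrow> gamble (\<lambda>x. - f x)"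
  using gamble_scale[of f "-1"] by simp

lemma gamble_mult: "gamble f \<Longrightarrow> gamble g \<Longrightarrow> gamble (\<lambda>x. f x * g x)"
  unfolding gamble_def
proof (elim exE)
  fix A B assume A: "\<forall>x. \<bar>f x\<bar> \<le> A" and B: "\<forall>x. \<bar>g x\<bar> \<le> B"
  show "\<exists>C. \<forall>x. \<bar>f x * g x\<bar> \<le> C"
    by (rule exI[of _ "A*B"]) (simp add: A B abs_mult mult_mono')
qed

lemma gamble_indicator: "gamble (indicator A)"
  unfolding gamble_def by (rule exI[of _ 1]) (simp add: indicator_def)

lemma gamble_sum: "finite F \<Longrightarrow> (\<forall>y\<in>F. gamble (h y)) \<Longrightarrow> gamble (\<lambda>w. \<Sum>y\<in>F. h y w)"
proof (induction F rule: finite_induct)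
  case empty then show ?case by (simp add: gamble_const)
next
  case (insert a F) then show ?case by (simp add: gamble_add)
qed

lemma gamble_bdd_below: "gamble f \<Longrightarrow> bdd_below (range f)"
  unfolding gamble_def bdd_below_def
  by (metis abs_le_D2 minus_le_iff rangeE)

lemma gamble_bdd_above: "gamble f \<Longrightarrow> bdd_above (range f)"
  unfolding gamble_def bdd_above_def
  by (metis abs_le_D1 rangeE)

definition sublin :: "(('a \<Rightarrow> real) \<Rightarrow> real) \<Rightarrow> bool" where
  "sublin q \<longleftrightarrow> (\<forall>f g. gamble f \<longrightarrow> gamble g \<longrightarrow> q (\<lambda>w. f w + g w) \<le> q f + q g) \<and>
     (\<forall>c f. 0 < c \<longrightarrow> gamble f \<longrightarrow> q (\<lambda>w. c * f w) = c * q f)"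

lemma sublin_add: "sublin q \<Longrightarrow> gamble f \<Longrightarrow> gamble g \<Longrightarrow> q (\<lambda>w. f w + g w) \<le> q f + q g"
  unfolding sublin_def by blast

lemma sublin_hom: "sublin q \<Longrightarrow> 0 < c \<Longrightarrow> gamble f \<Longrightarrow> q (\<lambda>w. c * f w) = c * q f"
  unfolding sublin_def by blast

lemma sublin_zero: "sublin q \<Longrightarrow> q (\<lambda>w. 0) = 0"
  using sublin_hom[of q 2 "\<lambda>w. 0"] gamble_const[of 0] by simp

lemma sublin_hom0: "sublin q \<Longrightarrow> 0 \<le> c \<Longrightarrow> gamble f \<Longrightarrow> q (\<lambda>w. c * f w) = c * q f"
  by (cases "c = 0") (auto simp: sublin_zero sublin_hom)

lemma sublin_neg: "sublin q \<Longrightarrow> gamble f \<Longrightarrow> - q (\<lambda>w. - f w) \<le> q f"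
  using sublin_add[of q f "\<lambda>w. - f w"] gamble_neg[of f] sublin_zero[of q] by simp

definition ext :: "(('a \<Rightarrow> real) \<Rightarrow> real) \<Rightarrow> ('a \<Rightarrow> real) \<Rightarrow> ('a \<Rightarrow> real) \<Rightarrow> real" where
  "ext q z x = (if gamble x then (INF t\<in>{0..}. q (\<lambda>w. x w + t * z w) - t * q z) else 0)"

lemma ext_lb:
  assumes q: "sublin q" and z: "gamble z" and x: "gamble x" and t: "0 \<le> t"
  shows "- q (\<lambda>w. - x w) \<le> q (\<lambda>w. x w + t * z w) - t * q z"
proof -
  have g1: "gamble (\<lambda>w. x w + t * z w)" using x z by (simp add: gamble_add gamble_scale)
  have "q (\<lambda>w. (x w + t * z w) + - x w) \<le> q (\<lambda>w. x w + t * z w) + q (\<lambda>w. - x w)"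
    using sublin_add[OF q g1 gamble_neg[OF x]] .
  moreover have "(\<lambda>w. (x w + t * z w) + - x w) = (\<lambda>w. t * z w)" by auto
  ultimately show ?thesis using sublin_hom0[OF q t z] by simp
qed

lemma ext_bdd:
  assumes q: "sublin q" and z: "gamble z" and x: "gamble x"
  shows "bdd_below ((\<lambda>t. q (\<lambda>w. x w + t * z w) - t * q z) ` {0..})"
  unfolding bdd_below_def using ext_lb[OF q z x] by auto

lemma ext_upper:
  assumes q: "sublin q" and z: "gamble z" and x: "gamble x" and t: "0 \<le> t"
  shows "ext q z x \<le> q (\<lambda>w. x w + t * z w) - t * q z"
  unfolding ext_def using x t by (auto intro!: cINF_lower ext_bdd[OF q z x])

lemma ext_lower:
  assumes q: "sublin q" and x: "gamble x"
    and "\<And>t. 0 \<le> t \<Longrightarrow> c \<le> q (\<lambda>w. x w + t * z w) - t * q z"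
  shows "c \<le> ext q z x"
  unfolding ext_def using x assms(3) by (auto intro!: cINF_greatest)

lemma ext_le:
  assumes q: "sublin q" and z: "gamble z" and x: "gamble x"
  shows "ext q z x \<le> q x"
  using ext_upper[OF q z x, of 0] by simp

lemma ext_negz:
  assumes q: "sublin q" and z: "gamble z"
  shows "ext q z (\<lambda>w. - z w) \<le> - q z"
  using ext_upper[OF q z gamble_neg[OF z], of 1] sublin_zero[OF q] by simp

lemma ext_sublin:
  assumes q: "sublin q" and z: "gamble z"
  shows "sublin (ext q z)"
  unfolding sublin_def
proof (intro conjI allI impI)
  fix x y :: "'a \<Rightarrow> real" assume x: "gamble x" and y: "gamble y"
  define \<phi> where "\<phi> x t = q (\<lambda>w. x w + t * z w) - t * q z" for x :: "'a \<Rightarrow> real" and t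
  have xy: "gamble (\<lambda>w. x w + y w)" using x y by (rule gamble_add)
  have key: "ext q z (\<lambda>w. x w + y w) \<le> \<phi> x s + \<phi> y t" if s: "0 \<le> s" and t: "0 \<le> t" for s t
  proof -
    have "ext q z (\<lambda>w. x w + y w) \<le> \<phi> (\<lambda>w. x w + y w) (s + t)"
      unfolding \<phi>_def using ext_upper[OF q z xy] s t by simp
    also have "(\<lambda>w. (x w + y w) + (s + t) * z w) = (\<lambda>w. (x w + s * z w) + (y w + t * z w))"
      by (auto simp: algebra_simps)
    then have "\<phi> (\<lambda>w. x w + y w) (s + t) \<le> \<phi> x s + \<phi> y t"
      unfolding \<phi>_def
      using sublin_add[OF q gamble_add[OF x gamble_scale[OF z, of s]] gamble_add[OF y gamble_scale[OF z, of t]]]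
      by (simp add: algebra_simps)
    finally show ?thesis .
  qed
  have "ext q z (\<lambda>w. x w + y w) - \<phi> y t \<le> ext q z x" if t: "0 \<le> t" for t
    by (rule ext_lower[OF q x]) (use key t in \<open>fastforce simp: \<phi>_def\<close>)
  then have "ext q z (\<lambda>w. x w + y w) - ext q z x \<le> ext q z y"
    by (intro ext_lower[OF q y]) (fastforce simp: \<phi>_def)
  then show "ext q z (\<lambda>w. x w + y w) \<le> ext q z x + ext q z y" by simp
next
  fix c :: real and x :: "'a \<Rightarrow> real" assume c: "0 < c" and x: "gamble x"
  have cx: "gamble (\<lambda>w. c * x w)" using x by (rule gamble_scale)
  have "ext q z (\<lambda>w. c * x w) / c \<le> ext q z x"
  proof (rule ext_lower[OF q x])
    fix t :: real assume t: "0 \<le> t"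
    have "ext q z (\<lambda>w. c * x w) \<le> q (\<lambda>w. c * x w + (c * t) * z w) - (c * t) * q z"
      using ext_upper[OF q z cx, of "c*t"] c t by simp
    also have "(\<lambda>w. c * x w + (c * t) * z w) = (\<lambda>w. c * (x w + t * z w))"
      by (auto simp: algebra_simps)
    also have "q (\<lambda>w. c * (x w + t * z w)) = c * q (\<lambda>w. x w + t * z w)"
      using sublin_hom[OF q c gamble_add[OF x gamble_scale[OF z]]] .
    finally show "ext q z (\<lambda>w. c * x w) / c \<le> q (\<lambda>w. x w + t * z w) - t * q z"
      using c by (simp add: field_simps)
  qed
  then have le1: "ext q z (\<lambda>w. c * x w) \<le> c * ext q z x" using c by (simp add: field_simps)
  have "c * ext q z x \<le> ext q z (\<lambda>w. c * x w)"
  proof (rule ext_lower[OF q cx])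
    fix t :: real assume t: "0 \<le> t"
    have e: "(\<lambda>w. c * x w + t * z w) = (\<lambda>w. c * (x w + (t/c) * z w))"
      using c by (auto simp: field_simps)
    have "q (\<lambda>w. c * (x w + (t/c) * z w)) = c * q (\<lambda>w. x w + (t/c) * z w)"
      using sublin_hom[OF q c gamble_add[OF x gamble_scale[OF z]]] .
    then have "q (\<lambda>w. c * x w + t * z w) - t * q z = c * (q (\<lambda>w. x w + (t/c) * z w) - (t/c) * q z)"
      unfolding e using c by (simp add: field_simps)
    moreover have "ext q z x \<le> q (\<lambda>w. x w + (t/c) * z w) - (t/c) * q z"
      using ext_upper[OF q z x, of "t/c"] c t by simp
    ultimately show "c * ext q z x \<le> q (\<lambda>w. c * x w + t * z w) - t * q z"
      using c by simp
  qed
  with le1 show "ext q z (\<lambda>w. c * x w) = c * ext q z x" by simp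
qed




lemma hahn_banach:
  fixes q :: "('a \<Rightarrow> real) \<Rightarrow> real"
  assumes q: "sublin q"
  shows "\<exists>P. (\<forall>f g. gamble f \<longrightarrow> gamble g \<longrightarrow> P (\<lambda>w. f w + g w) = P f + P g) \<and>
             (\<forall>c f. gamble f \<longrightarrow> P (\<lambda>w. c * f w) = c * P f) \<and>
             (\<forall>f. gamble f \<longrightarrow> P f \<le> q f)"
proof -
  define A where "A = {r :: ('a \<Rightarrow> real) \<Rightarrow> real. sublin r \<and> (\<forall>f. gamble f \<longrightarrow> r f \<le> q f) \<and>
                        (\<forall>f. \<not> gamble f \<longrightarrow> r f = 0)}"
  define R where "R = (\<lambda>a b :: ('a \<Rightarrow> real) \<Rightarrow> real. \<forall>f. b f \<le> a f)"
  have po: "partial_order_on A (relation_of R A)"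
    unfolding partial_order_on_def preorder_on_def refl_on_def trans_def antisym_def relation_of_def R_def
    by (auto intro!: ext intro: order_trans antisym)
  define q0 where "q0 = (\<lambda>f. if gamble f then q f else 0)"
  have q0A: "q0 \<in> A"
    unfolding A_def q0_def sublin_def
    using sublin_add[OF q] sublin_hom[OF q] by (auto simp: gamble_add gamble_scale)
  have ch: "\<exists>u\<in>A. \<forall>a\<in>C. R a u" if C: "C \<in> Chains (relation_of R A)" for C
  proof (cases "C = {}")
    case True then show ?thesis using q0A by blast
  next
    case False
    have CA: "C \<subseteq> A" using C unfolding Chains_def relation_of_def by auto
    have tot: "R a b \<or> R b a" if "a \<in> C" "b \<in> C" for a b
      using C that unfolding Chains_def relation_of_def by auto
    have bdd: "bdd_below ((\<lambda>r. r f) ` C)" if f: "gamble f" for f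
    proof -
      have "- q (\<lambda>w. - f w) \<le> r f" if "r \<in> C" for r
      proof -
        have r: "sublin r" "\<forall>f. gamble f \<longrightarrow> r f \<le> q f" using CA that unfolding A_def by auto
        show ?thesis using sublin_neg[OF r(1) f] r(2) gamble_neg[OF f] by force
      qed
      then show ?thesis unfolding bdd_below_def by auto
    qed
    define u where "u = (\<lambda>f. if gamble f then (INF r\<in>C. r f) else 0)"
    have ulow: "u f \<le> r f" if "gamble f" "r \<in> C" for f r
      unfolding u_def using that bdd by (auto intro: cINF_lower)
    have ugr: "c \<le> u f" if "gamble f" "\<And>r. r \<in> C \<Longrightarrow> c \<le> r f" for f c
      unfolding u_def using that False by (auto intro: cINF_greatest)
    have rsub: "sublin r" if "r \<in> C" for r using CA that unfolding A_def by auto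
    have uA: "u \<in> A"
      unfolding A_def
    proof (intro CollectI conjI allI impI)
      show "sublin u"
        unfolding sublin_def
      proof (intro conjI allI impI)
        fix f g :: "'a \<Rightarrow> real" assume f: "gamble f" and g: "gamble g"
        have fg: "gamble (\<lambda>w. f w + g w)" using f g by (rule gamble_add)
        have k: "u (\<lambda>w. f w + g w) \<le> r1 f + r2 g" if "r1 \<in> C" "r2 \<in> C" for r1 r2
        proof (cases "R r1 r2")
          case True
          then have "u (\<lambda>w. f w + g w) \<le> r2 f + r2 g"
            using ulow[OF fg that(2)] sublin_add[OF rsub[OF that(2)] f g] by simp
          then show ?thesis using True unfolding R_def by (smt (verit))
        next
          case False
          then have "R r2 r1" using tot that by blast
          then have "u (\<lambda>w. f w + g w) \<le> r1 f + r1 g"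
            using ulow[OF fg that(1)] sublin_add[OF rsub[OF that(1)] f g] by simp
          then show ?thesis using \<open>R r2 r1\<close> unfolding R_def by (smt (verit))
        qed
        have "u (\<lambda>w. f w + g w) - r2 g \<le> u f" if "r2 \<in> C" for r2
          using k that by (intro ugr f) (smt (verit))
        then have "u (\<lambda>w. f w + g w) - u f \<le> u g"
          by (intro ugr g) (smt (verit))
        then show "u (\<lambda>w. f w + g w) \<le> u f + u g" by simp
      next
        fix c :: real and f :: "'a \<Rightarrow> real" assume c: "0 < c" and f: "gamble f"
        have cf: "gamble (\<lambda>w. c * f w)" using f by (rule gamble_scale)
        have "u (\<lambda>w. c * f w) / c \<le> u f"
        proof (rule ugr[OF f])
          fix r assume "r \<in> C"
          then have "u (\<lambda>w. c * f w) \<le> c * r f"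
            using ulow[OF cf] sublin_hom[OF rsub c f] by metis
          then show "u (\<lambda>w. c * f w) / c \<le> r f" using c by (simp add: field_simps)
        qed
        moreover have "c * u f \<le> u (\<lambda>w. c * f w)"
        proof (rule ugr[OF cf])
          fix r assume r: "r \<in> C"
          then show "c * u f \<le> r (\<lambda>w. c * f w)"
            using ulow[OF f r] sublin_hom[OF rsub[OF r] c f] c by simp
        qed
        ultimately show "u (\<lambda>w. c * f w) = c * u f" using c by (simp add: field_simps)
      qed
    next
      fix f :: "'a \<Rightarrow> real" assume f: "gamble f"
      obtain r where r: "r \<in> C" using False by blast
      then show "u f \<le> q f" using ulow[OF f r] CA f unfolding A_def by force
    next
      fix f :: "'a \<Rightarrow> real" assume "\<not> gamble f"
      then show "u f = 0" unfolding u_def by simp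
    qed
    have "R a u" if "a \<in> C" for a
      unfolding R_def
    proof
      fix f show "u f \<le> a f"
      proof (cases "gamble f")
        case True then show ?thesis using ulow that by blast
      next
        case False then show ?thesis using that CA unfolding A_def u_def by auto
      qed
    qed
    then show ?thesis using uA by blast
  qed
  obtain m where mA: "m \<in> A" and mmin: "\<forall>a\<in>A. R m a \<longrightarrow> a = m"
    using predicate_Zorn[OF po ch] by blast
  have msub: "sublin m" and mq: "\<forall>f. gamble f \<longrightarrow> m f \<le> q f" and m0: "\<forall>f. \<not> gamble f \<longrightarrow> m f = 0"
    using mA unfolding A_def by auto
  have madd: "m (\<lambda>w. f w + g w) = m f + m g" if f: "gamble f" and g: "gamble g" for f g
  proof -
    define m' where "m' = ext m g"
    have "m' \<in> A"
      unfolding A_def m'_def using ext_sublin[OF msub g] ext_le[OF msub g] mq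
      by (auto simp: ext_def intro: order_trans)
    moreover have "R m m'"
      unfolding R_def m'_def using ext_le[OF msub g] m0 by (auto simp: ext_def)
    ultimately have "m' = m" using mmin by blast
    then have "m f \<le> m (\<lambda>w. f w + 1 * g w) - 1 * m g"
      using ext_upper[OF msub g f, of 1] unfolding m'_def by simp
    then have "m f + m g \<le> m (\<lambda>w. f w + g w)" by simp
    then show ?thesis using sublin_add[OF msub f g] by simp
  qed
  have mneg: "m (\<lambda>w. - f w) = - m f" if f: "gamble f" for f
    using madd[OF f gamble_neg[OF f]] sublin_zero[OF msub] by simp
  have mhom: "m (\<lambda>w. c * f w) = c * m f" if f: "gamble f" for c f
  proof (cases "0 \<le> c")
    case True then show ?thesis using sublin_hom0[OF msub True f] by simp
  next
    case False
    have "m (\<lambda>w. - ((-c) * f w)) = - m (\<lambda>w. (-c) * f w)" using mneg[OF gamble_scale[OF f]] .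
    then show ?thesis using sublin_hom[OF msub, of "-c" f] False f by simp
  qed
  show ?thesis using madd mhom mq by blast
qed




lemma coh_inst:
  fixes m K :: nat and fs :: "nat \<Rightarrow> 'a \<Rightarrow> real"
  assumes "coherent_lp LP" "\<forall>k\<le>K. gamble (fs k)"
  shows "0 \<le> (SUP \<omega>. (\<Sum>k=1..K. fs k \<omega> - LP (fs k)) - real m * (fs 0 \<omega> - LP (fs 0)))"
  using assms(1)[unfolded coherent_lp_def, rule_format, of K fs m] assms(2) by blast

lemma coh_lower:
  assumes LP: "coherent_lp LP" and f: "gamble f" and c: "\<And>x. c \<le> f x"
  shows "c \<le> LP f"
proof -
  have "0 \<le> (SUP \<omega>. (\<Sum>k::nat=1..0. f \<omega> - LP f) - real 1 * (f \<omega> - LP f))"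
    using coh_inst[OF LP, of 0 "\<lambda>k. f" 1] f by simp
  also have "\<dots> \<le> LP f - c"
    by (rule cSUP_least) (use c in auto)
  finally show ?thesis by simp
qed

lemma coh_upper:
  assumes LP: "coherent_lp LP" and f: "gamble f" and c: "\<And>x. f x \<le> c"
  shows "LP f \<le> c"
proof -
  have "0 \<le> (SUP \<omega>. (\<Sum>k::nat=1..1. f \<omega> - LP f) - real 0 * (f \<omega> - LP f))"
    using coh_inst[OF LP, of 1 "\<lambda>k. f" 0] f by simp
  also have "\<dots> \<le> c - LP f"
    by (rule cSUP_least) (use c in auto)
  finally show ?thesis by simp
qed

lemma coh_inf:
  assumes LP: "coherent_lp LP" and f: "gamble f"
  shows "(INF x. f x) \<le> LP f"
  by (rule coh_lower[OF LP f]) (rule cINF_lower[OF gamble_bdd_below[OF f]], simp)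

lemma coh_superadd:
  assumes LP: "coherent_lp LP" and f: "gamble f" and g: "gamble g"
  shows "LP f + LP g \<le> LP (\<lambda>w. f w + g w)"
proof -
  define fs where "fs = (\<lambda>k::nat. if k = 0 then (\<lambda>w. f w + g w) else if k = 1 then f else g)"
  have "\<forall>k\<le>2. gamble (fs k)" unfolding fs_def using f g by (auto simp: gamble_add)
  from coh_inst[OF LP this, of 1]
  have "0 \<le> (SUP \<omega>. (\<Sum>k=1..2. fs k \<omega> - LP (fs k)) - real 1 * (fs 0 \<omega> - LP (fs 0)))" .
  also have "(\<lambda>\<omega>. (\<Sum>k=1..2. fs k \<omega> - LP (fs k)) - real 1 * (fs 0 \<omega> - LP (fs 0))) =
             (\<lambda>\<omega>. LP (\<lambda>w. f w + g w) - LP f - LP g)"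
    by (auto simp: fs_def numeral_2_eq_2)
  finally show ?thesis by simp
qed

lemma coh_rat:
  assumes LP: "coherent_lp LP" and f: "gamble f" and a: "0 < a" and b: "0 < b"
  shows "LP (\<lambda>w. (real a / real b) * f w) = (real a / real b) * LP f"
proof -
  define g where "g = (\<lambda>w. (real a / real b) * f w)"
  have g: "gamble g" unfolding g_def using f by (rule gamble_scale)
  define fs1 where "fs1 = (\<lambda>k::nat. if k = 0 then g else f)"
  have "\<forall>k\<le>a. gamble (fs1 k)" unfolding fs1_def using f g by auto
  from coh_inst[OF LP this, of b]
  have "0 \<le> (SUP \<omega>. (\<Sum>k=1..a. fs1 k \<omega> - LP (fs1 k)) - real b * (fs1 0 \<omega> - LP (fs1 0)))" .
  also have "(\<lambda>\<omega>. (\<Sum>k=1..a. fs1 k \<omega> - LP (fs1 k)) - real b * (fs1 0 \<omega> - LP (fs1 0))) =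
             (\<lambda>\<omega>. real b * LP g - real a * LP f)"
  proof
    fix \<omega>
    have "(\<Sum>k=1..a. fs1 k \<omega> - LP (fs1 k)) = (\<Sum>k=1..a. f \<omega> - LP f)"
      by (rule sum.cong) (auto simp: fs1_def)
    then show "(\<Sum>k=1..a. fs1 k \<omega> - LP (fs1 k)) - real b * (fs1 0 \<omega> - LP (fs1 0)) =
             real b * LP g - real a * LP f"
      using b by (simp add: fs1_def g_def algebra_simps)
  qed
  finally have 1: "real a * LP f \<le> real b * LP g" by simp
  define fs2 where "fs2 = (\<lambda>k::nat. if k = 0 then f else g)"
  have "\<forall>k\<le>b. gamble (fs2 k)" unfolding fs2_def using f g by auto
  from coh_inst[OF LP this, of a]
  have "0 \<le> (SUP \<omega>. (\<Sum>k=1..b. fs2 k \<omega> - LP (fs2 k)) - real a * (fs2 0 \<omega> - LP (fs2 0)))" .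
  also have "(\<lambda>\<omega>. (\<Sum>k=1..b. fs2 k \<omega> - LP (fs2 k)) - real a * (fs2 0 \<omega> - LP (fs2 0))) =
             (\<lambda>\<omega>. real a * LP f - real b * LP g)"
  proof
    fix \<omega>
    have "(\<Sum>k=1..b. fs2 k \<omega> - LP (fs2 k)) = (\<Sum>k=1..b. g \<omega> - LP g)"
      by (rule sum.cong) (auto simp: fs2_def)
    then show "(\<Sum>k=1..b. fs2 k \<omega> - LP (fs2 k)) - real a * (fs2 0 \<omega> - LP (fs2 0)) =
             real a * LP f - real b * LP g"
      using b by (simp add: fs2_def g_def algebra_simps)
  qed
  finally have 2: "real b * LP g \<le> real a * LP f" by simp
  from 1 2 have "real b * LP g = real a * LP f" by simp
  then show ?thesis using b unfolding g_def[symmetric] by (simp add: field_simps)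
qed




lemma coh_lip:
  assumes LP: "coherent_lp LP" and f: "gamble f" and g: "gamble g" and M: "\<And>x. \<bar>f x - g x\<bar> \<le> M"
  shows "\<bar>LP f - LP g\<bar> \<le> M"
proof -
  have d1: "gamble (\<lambda>w. f w - g w)" using gamble_add[OF f gamble_neg[OF g]] by simp
  have d2: "gamble (\<lambda>w. g w - f w)" using gamble_add[OF g gamble_neg[OF f]] by simp
  have "LP g + LP (\<lambda>w. f w - g w) \<le> LP (\<lambda>w. g w + (f w - g w))" by (rule coh_superadd[OF LP g d1])
  moreover have "- M \<le> LP (\<lambda>w. f w - g w)" by (rule coh_lower[OF LP d1]) (use M in \<open>smt (verit)\<close>)
  moreover have "LP f + LP (\<lambda>w. g w - f w) \<le> LP (\<lambda>w. f w + (g w - f w))" by (rule coh_superadd[OF LP f d2])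
  moreover have "- M \<le> LP (\<lambda>w. g w - f w)" by (rule coh_lower[OF LP d2]) (use M in \<open>smt (verit)\<close>)
  ultimately show ?thesis by simp
qed

lemma small_zero:
  fixes d K :: real
  assumes K: "0 < K" and e: "\<And>e. 0 < e \<Longrightarrow> \<bar>d\<bar> \<le> e * K"
  shows "d = 0"
proof (rule ccontr)
  assume "d \<noteq> 0"
  then have "\<bar>d\<bar> \<le> (\<bar>d\<bar> / (2*K)) * K" using e[of "\<bar>d\<bar> / (2*K)"] K by simp
  then show False using K \<open>d \<noteq> 0\<close> by (simp add: field_simps)
qed

lemma coh_hom:
  assumes LP: "coherent_lp LP" and f: "gamble f" and c: "0 < c"
  shows "LP (\<lambda>w. c * f w) = c * LP f"
proof -
  obtain B where B: "\<And>x. \<bar>f x\<bar> \<le> B" using f unfolding gamble_def by blast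
  have B0: "0 \<le> B" using B[of undefined] by simp
  have "LP (\<lambda>w. c * f w) - c * LP f = 0"
  proof (rule small_zero[of "B + \<bar>LP f\<bar> + 1"])
    show "0 < B + \<bar>LP f\<bar> + 1" using B0 by simp
    fix e :: real assume e: "0 < e"
    obtain r where r: "r \<in> \<rat>" "c < r" "r < c + e" using Rats_dense_in_real[of c "c+e"] e by auto
    obtain a b :: nat where ab: "b \<noteq> 0" "\<bar>r\<bar> = real a / real b" by (rule Rats_abs_nat_div_natE[OF r(1)])
    have r0: "0 < r" using r c by simp
    then have rab: "r = real a / real b" using ab by simp
    then have a0: "0 < a" using r0 ab by (cases a) auto
    have "LP (\<lambda>w. r * f w) = r * LP f" unfolding rab using coh_rat[OF LP f a0] ab by simp
    moreover have "\<bar>LP (\<lambda>w. c * f w) - LP (\<lambda>w. r * f w)\<bar> \<le> e * B"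
    proof (rule coh_lip[OF LP gamble_scale[OF f] gamble_scale[OF f]])
      fix x
      have "\<bar>c * f x - r * f x\<bar> = \<bar>r - c\<bar> * \<bar>f x\<bar>" by (simp add: abs_mult[symmetric] algebra_simps)
      also have "\<dots> \<le> e * B" using r B[of x] by (intro mult_mono) auto
      finally show "\<bar>c * f x - r * f x\<bar> \<le> e * B" .
    qed
    moreover have "\<bar>r * LP f - c * LP f\<bar> \<le> e * \<bar>LP f\<bar>"
    proof -
      have "\<bar>r * LP f - c * LP f\<bar> = \<bar>r - c\<bar> * \<bar>LP f\<bar>"
        by (simp add: abs_mult[symmetric] left_diff_distrib)
      also have "\<dots> \<le> e * \<bar>LP f\<bar>" using r by (intro mult_right_mono) auto
      finally show ?thesis .
    qed
    ultimately have "\<bar>LP (\<lambda>w. c * f w) - c * LP f\<bar> \<le> e * B + e * \<bar>LP f\<bar>" by linarith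
    then show "\<bar>LP (\<lambda>w. c * f w) - c * LP f\<bar> \<le> e * (B + \<bar>LP f\<bar> + 1)"
      using e by (simp add: algebra_simps)
  qed
  then show ?thesis by simp
qed




lemma lower_envelope:
  assumes LP: "coherent_lp LP" and h: "gamble h"
  shows "\<exists>P\<in>credal LP. P h = LP h"
proof -
  define UP where "UP = (\<lambda>f. - LP (\<lambda>w. - f w))"
  have UPs: "sublin UP"
    unfolding sublin_def UP_def
  proof (intro conjI allI impI)
    fix f g :: "'a \<Rightarrow> real" assume f: "gamble f" and g: "gamble g"
    show "- LP (\<lambda>w. - (f w + g w)) \<le> - LP (\<lambda>w. - f w) + - LP (\<lambda>w. - g w)"
      using coh_superadd[OF LP gamble_neg[OF f] gamble_neg[OF g]] by simp
  next
    fix c :: real and f :: "'a \<Rightarrow> real" assume c: "0 < c" and f: "gamble f"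
    show "- LP (\<lambda>w. - (c * f w)) = c * - LP (\<lambda>w. - f w)"
      using coh_hom[OF LP gamble_neg[OF f] c] by simp
  qed
  define z where "z = (\<lambda>w. - h w)"
  have z: "gamble z" unfolding z_def using h by (rule gamble_neg)
  obtain P where Padd: "\<forall>f g. gamble f \<longrightarrow> gamble g \<longrightarrow> P (\<lambda>w. f w + g w) = P f + P g"
    and Phom: "\<forall>c f. gamble f \<longrightarrow> P (\<lambda>w. c * f w) = c * P f"
    and Ple: "\<forall>f. gamble f \<longrightarrow> P f \<le> ext UP z f"
    using hahn_banach[OF ext_sublin[OF UPs z]] by blast
  have Pneg: "P (\<lambda>w. - f w) = - P f" if "gamble f" for f
    using Phom[rule_format, OF that, of "-1"] by simp
  have PUP: "P f \<le> UP f" if "gamble f" for f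
    using order_trans[OF Ple[rule_format, OF that] ext_le[OF UPs z that]] .
  have PLP: "LP f \<le> P f" if f: "gamble f" for f
    using PUP[OF gamble_neg[OF f]] Pneg[OF f] unfolding UP_def by simp
  have "P (\<lambda>w. - z w) \<le> - UP z"
    using order_trans[OF Ple[rule_format, OF gamble_neg[OF z]] ext_negz[OF UPs z]] .
  then have "P h \<le> LP h" unfolding z_def UP_def by simp
  with PLP[OF h] have eq: "P h = LP h" by simp
  have "P \<in> credal LP"
    unfolding credal_def linear_prevision_def
  proof (intro CollectI conjI allI impI)
    fix f :: "'a \<Rightarrow> real" assume f: "gamble f"
    show "(INF x. f x) \<le> P f" using order_trans[OF coh_inf[OF LP f] PLP[OF f]] .
  qed (use Padd Phom PLP in auto)
  with eq show ?thesis by blast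
qed




lemma coh_sum:
  assumes LP: "coherent_lp LP"
  shows "finite F \<Longrightarrow> (\<forall>y\<in>F. gamble (h y)) \<Longrightarrow> (\<Sum>y\<in>F. LP (h y)) \<le> LP (\<lambda>w. \<Sum>y\<in>F. h y w)"
proof (induction F rule: finite_induct)
  case empty then show ?case using coh_lower[OF LP gamble_const, of 0 0] by simp
next
  case (insert a F)
  have ga: "gamble (h a)" and gF: "\<forall>y\<in>F. gamble (h y)" using insert.prems by auto
  have IH: "(\<Sum>y\<in>F. LP (h y)) \<le> LP (\<lambda>w. \<Sum>y\<in>F. h y w)" using insert.IH gF .
  have "(\<Sum>y\<in>insert a F. LP (h y)) = LP (h a) + (\<Sum>y\<in>F. LP (h y))" using insert.hyps by simp
  also have "\<dots> \<le> LP (h a) + LP (\<lambda>w. \<Sum>y\<in>F. h y w)" using IH by linarith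
  also have "\<dots> \<le> LP (\<lambda>w. h a w + (\<Sum>y\<in>F. h y w))"
    by (rule coh_superadd[OF LP ga gamble_sum[OF insert.hyps(1) gF]])
  also have "(\<lambda>w. h a w + (\<Sum>y\<in>F. h y w)) = (\<lambda>w. \<Sum>y\<in>insert a F. h y w)"
    using insert.hyps by simp
  finally show ?case .
qed

lemma ind_Bcell: "indicator (Bcell y) w = (if y = fst w then 1 else (0::real))"
  by (cases w) (auto simp: Bcell_def indicator_def)




lemma countable_pos_cells:
  fixes LP :: "(('y \<times> 't) \<Rightarrow> real) \<Rightarrow> real"
  assumes LP: "coherent_lp LP"
  shows "countable {y. 0 < LP (indicator (Bcell y))}"
proof -
  define T where "T n = {y. inverse (real (Suc n)) < LP (indicator (Bcell y))}" for n
  have fin: "finite (T n)" for n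
  proof -
    have "card G \<le> Suc n" if G: "G \<subseteq> T n" "finite G" for G
    proof -
      have gG: "\<forall>y\<in>G. gamble (indicator (Bcell y) :: 'y \<times> 't \<Rightarrow> real)"
        using gamble_indicator by blast
      have "real (card G) * inverse (real (Suc n)) \<le> (\<Sum>y\<in>G. LP (indicator (Bcell y)))"
        by (rule sum_bounded_below) (use G in \<open>auto simp: T_def\<close>)
      also have "\<dots> \<le> LP (\<lambda>w. \<Sum>y\<in>G. indicator (Bcell y) w)"
        by (rule coh_sum[OF LP G(2) gG])
      also have "\<dots> \<le> 1"
      proof (rule coh_upper[OF LP gamble_sum[OF G(2) gG]])
        fix x :: "'y \<times> 't"
        have "(\<Sum>y\<in>G. indicator (Bcell y) x) = (\<Sum>y\<in>G. if y = fst x then 1 else (0::real))"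
          by (rule sum.cong) (auto simp: ind_Bcell)
        also have "\<dots> = (if fst x \<in> G then 1 else 0)" using G(2) by (simp add: sum.delta)
        finally show "(\<Sum>y\<in>G. indicator (Bcell y) x) \<le> (1::real)" by simp
      qed
      finally have "real (card G) * inverse (real (Suc n)) \<le> 1" .
      then have "real (card G) \<le> real (Suc n)" by (simp add: field_simps)
      then show ?thesis by linarith
    qed
    then show ?thesis using finite_if_finite_subsets_card_bdd[of "T n" "Suc n"] by fast
  qed
  have "{y. 0 < LP (indicator (Bcell y))} \<subseteq> (\<Union>n. T n)"
  proof
    fix y assume "y \<in> {y. 0 < LP (indicator (Bcell y))}"
    then have "0 < LP (indicator (Bcell y))" by simp
    then obtain n where n: "n > 0" "inverse (real n) < LP (indicator (Bcell y))"
      using ex_inverse_of_nat_less by blast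
    then obtain k where "n = Suc k" using gr0_implies_Suc by blast
    then have "y \<in> T k" using n unfolding T_def by simp
    then show "y \<in> (\<Union>n. T n)" by blast
  qed
  moreover have "countable (\<Union>n. T n)"
    by (intro countable_UN) (simp_all add: countable_finite fin)
  ultimately show ?thesis by (rule countable_subset)
qed



theorem proposition1:
  fixes LP :: "(('y \<times> 't) \<Rightarrow> real) \<Rightarrow> real"
    and Pi :: "'y \<Rightarrow> ('t \<Rightarrow> real) \<Rightarrow> real"
  assumes "coherent_lp LP"
    and "B_conglomerable LP"
    and "\<forall>y. coherent_lp (Pi y)"
    and "\<forall>y g. gamble g \<longrightarrow> Pi y g \<le> gen_bayes LP y g"
  shows "\<forall>(H::'t set) (\<beta>::real). 0 \<le> \<beta> \<and> \<beta> \<le> 1 \<longrightarrow>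
           0 \<le> LP (\<lambda>(y, \<theta>). (indicator H \<theta> - \<beta>) *
                              (if Pi y (indicator H) > \<beta> then 1 else 0))"
proof (intro allI impI)
  fix H :: "'t set" and \<beta> :: real
  assume \<beta>: "0 \<le> \<beta> \<and> \<beta> \<le> 1"
  note LP = assms(1)
  define f where "f = (\<lambda>(y, \<theta>). (indicator H \<theta> - \<beta>) *
                              (if Pi y (indicator H) > \<beta> then 1 else (0::real)))"
  define S where "S = {y. \<beta> < Pi y (indicator H)}"
  have fg: "gamble f"
    unfolding gamble_def f_def using \<beta> by (intro exI[of _ 1]) (auto simp: indicator_def)
  show "0 \<le> LP f"
  proof (cases "H = UNIV")
    case True
    show ?thesis by (rule coh_lower[OF LP fg]) (use \<beta> True in \<open>auto simp: f_def\<close>)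
  next
    case False
    then obtain \<theta>0 where \<theta>0: "\<theta>0 \<notin> H" by blast
    have pos: "0 < LP (\<lambda>p. indicator (Bcell y) p * f p)" and posB: "0 < LP (indicator (Bcell y))"
      if yS: "y \<in> S" for y
    proof -
      define Bi :: "'y \<times> 't \<Rightarrow> real" where "Bi = indicator (Bcell y)"
      define N :: "'y \<times> 't \<Rightarrow> real" where "N = (\<lambda>p. indicator H (snd p) * Bi p)"
      have gBi: "gamble Bi" unfolding Bi_def by (rule gamble_indicator)
      have gN: "gamble N" unfolding gamble_def N_def Bi_def
        by (intro exI[of _ 1]) (auto simp: indicator_def)
      have hPi: "Pi y (indicator H) \<le> gen_bayes LP y (indicator H)"
        using assms(4) gamble_indicator[of H] by simp
      have Pib: "\<beta> < Pi y (indicator H)" using yS unfolding S_def by simp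
      have "LP Bi \<noteq> 0"
      proof
        assume "LP Bi = 0"
        then have "gen_bayes LP y (indicator H) = (INF \<theta>. indicator H \<theta>)"
          unfolding gen_bayes_def Bi_def by simp
        also have "\<dots> \<le> indicator H \<theta>0"
          by (rule cINF_lower[OF gamble_bdd_below[OF gamble_indicator]]) simp
        finally show False using hPi Pib \<beta> \<theta>0 by simp
      qed
      moreover have "0 \<le> LP Bi" by (rule coh_lower[OF LP gBi]) (simp add: Bi_def)
      ultimately have LPB: "0 < LP Bi" by simp
      then show "0 < LP (indicator (Bcell y))" unfolding Bi_def .
      have GB: "gen_bayes LP y (indicator H) = (INF P\<in>credal LP. P N / P Bi)"
        unfolding gen_bayes_def N_def Bi_def using \<open>LP Bi \<noteq> 0\<close> by (simp add: Bi_def)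
      have eqf: "(\<lambda>p. indicator (Bcell y) p * f p) = (\<lambda>p. N p + (- \<beta>) * Bi p)"
      proof
        fix p :: "'y \<times> 't"
        obtain a \<theta> where p: "p = (a, \<theta>)" by (cases p)
        show "indicator (Bcell y) p * f p = N p + (- \<beta>) * Bi p"
          using yS unfolding p N_def Bi_def f_def S_def ind_Bcell by (auto simp: algebra_simps)
      qed
      show "0 < LP (\<lambda>p. indicator (Bcell y) p * f p)"
      proof (rule ccontr)
        assume "\<not> 0 < LP (\<lambda>p. indicator (Bcell y) p * f p)"
        then have le0: "LP (\<lambda>p. N p + (- \<beta>) * Bi p) \<le> 0" unfolding eqf by simp
        obtain P where P: "P \<in> credal LP" and Peq: "P (\<lambda>p. N p + (- \<beta>) * Bi p) = LP (\<lambda>p. N p + (- \<beta>) * Bi p)"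
          using lower_envelope[OF LP gamble_add[OF gN gamble_scale[OF gBi]]] by blast
        have Plin: "linear_prevision P" and Pge: "\<forall>f. gamble f \<longrightarrow> LP f \<le> P f"
          using P unfolding credal_def by auto
        have "P (\<lambda>p. N p + (- \<beta>) * Bi p) = P N + (- \<beta>) * P Bi"
        proof -
          have a: "P (\<lambda>p. N p + (- \<beta>) * Bi p) = P N + P (\<lambda>p. (- \<beta>) * Bi p)"
            using Plin gN gamble_scale[OF gBi, of "- \<beta>"] unfolding linear_prevision_def by blast
          have b: "P (\<lambda>p. (- \<beta>) * Bi p) = (- \<beta>) * P Bi"
            using Plin gBi unfolding linear_prevision_def by blast
          show ?thesis using a b by simp
        qed
        then have 1: "P N - \<beta> * P Bi \<le> 0" using Peq le0 by simp
        have PB: "0 < P Bi" using Pge gBi LPB by force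
        have ratio: "P N / P Bi \<le> \<beta>" using 1 PB by (simp add: field_simps)
        have nonneg: "0 \<le> Q N / Q Bi" if Q: "Q \<in> credal LP" for Q
        proof -
          have Ql: "linear_prevision Q" and Qge: "\<forall>f. gamble f \<longrightarrow> LP f \<le> Q f"
            using Q unfolding credal_def by auto
          have "0 \<le> (INF x. N x)"
            by (rule cINF_greatest) (auto simp: N_def Bi_def indicator_def)
          also have "\<dots> \<le> Q N" using Ql gN unfolding linear_prevision_def by blast
          finally have "0 \<le> Q N" .
          moreover have "0 \<le> Q Bi" using Qge gBi LPB by force
          ultimately show ?thesis by simp
        qed
        have "(INF Q\<in>credal LP. Q N / Q Bi) \<le> P N / P Bi"
          by (rule cINF_lower[OF _ P]) (use nonneg in \<open>auto simp: bdd_below_def\<close>)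
        then show False using GB hPi Pib ratio by simp
      qed
    qed
    have cS: "countable S"
      by (rule countable_subset[OF _ countable_pos_cells[OF LP]]) (use posB in blast)
    have "0 \<le> LP (\<lambda>p. indicator (\<Union>y\<in>S. Bcell y) p * f p)"
      using assms(2)[unfolded B_conglomerable_def, rule_format, OF fg cS] pos by simp
    moreover have "(\<lambda>p. indicator (\<Union>y\<in>S. Bcell y) p * f p) = f"
    proof
      fix p :: "'y \<times> 't"
      obtain a \<theta> where p: "p = (a, \<theta>)" by (cases p)
      show "indicator (\<Union>y\<in>S. Bcell y) p * f p = f p"
        unfolding p f_def S_def by (auto simp: indicator_def Bcell_def)
    qed
    ultimately show ?thesis by simp
  qed
qed


end
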